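(* Let $G=(V,E)$ be an undirected graph in which every vertex has degree at most $d$, let $\pi$ be a uniformly random ordering of $V$, and let $P$ be the $\delta$-prefix of $V$ with respect to $\pi$. If $\delta\le k/d$, then the expected number of vertices in $P$ incident to at least one internal edge of $P$ is $O(k|P|)$.
   Context: For $0<\delta\le1$, the $\delta$-prefix of $V$ with respect to $\pi$ is the set of the $\delta|V|$ earliest vertices in $\pi$. The internal edges of $P$ are the edges of $G$ with both endpoints in $P$. *)

theory Defs
  imports "HOL-Probability.Probability" "HOL-Combinatorics.Multiset_Permutations"
begin

definition ugraph :: "'a set \<Rightarrow> 'a set set \<Rightarrow> bool" where
  "ugraph V E \<longleftrightarrow> finite V \<and> (\<forall>e\<in>E. e \<subseteq> V \<and> card e = 2)"

definition degree :: "'a set set \<Rightarrow> 'a \<Rightarrow> nat" where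
  "degree E v = card {e\<in>E. v \<in> e}"

text \<open>The delta-prefix of V with respect to an ordering pi (a list enumerating V):
  the first floor(delta |V|) vertices.\<close>
definition prefix_set :: "real \<Rightarrow> 'a set \<Rightarrow> 'a list \<Rightarrow> 'a set" where
  "prefix_set \<delta> V \<pi> = set (take (nat \<lfloor>\<delta> * real (card V)\<rfloor>) \<pi>)"

definition internal_edges :: "'a set set \<Rightarrow> 'a set \<Rightarrow> 'a set set" where
  "internal_edges E P = {e\<in>E. e \<subseteq> P}"

definition covered_vertices :: "'a set set \<Rightarrow> 'a set \<Rightarrow> 'a set" where
  "covered_vertices E P = {v\<in>P. \<exists>e\<in>internal_edges E P. v \<in> e}"

end

theory Submission
  imports Defs
begin

lemma double_count:
  assumes "finite A" "finite B"
  shows "(\<Sum>a\<in>A. card {b\<in>B. R a b}) = (\<Sum>b\<in>B. card {a\<in>A. R a b})"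
proof -
  have "\<And>a. card {b\<in>B. R a b} = (\<Sum>b\<in>B. if R a b then 1 else 0)"
    using assms by (simp add: sum.inter_filter[symmetric])
  moreover have "\<And>b. card {a\<in>A. R a b} = (\<Sum>a\<in>A. if R a b then 1 else 0)"
    using assms by (simp add: sum.inter_filter[symmetric])
  ultimately have "(\<Sum>a\<in>A. card {b\<in>B. R a b}) = (\<Sum>a\<in>A. \<Sum>b\<in>B. if R a b then 1 else 0)"
    "(\<Sum>b\<in>B. card {a\<in>A. R a b}) = (\<Sum>b\<in>B. \<Sum>a\<in>A. if R a b then 1 else 0)"
    by simp_all
  moreover have "(\<Sum>a\<in>A. \<Sum>b\<in>B. if R a b then 1 else (0::nat)) = (\<Sum>b\<in>B. \<Sum>a\<in>A. if R a b then 1 else 0)"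
    by (rule sum.swap)
  ultimately show ?thesis by simp
qed

lemma card_take_perm:
  assumes "\<pi> \<in> permutations_of_set V" "m \<le> card V"
  shows "card (set (take m \<pi>)) = m"
proof -
  have d: "distinct (take m \<pi>)" using permutations_of_setD(2)[OF assms(1)] by (rule distinct_take)
  have l: "length \<pi> = card V" by (rule length_finite_permutations_of_set[OF assms(1)])
  have "card (set (take m \<pi>)) = length (take m \<pi>)" by (rule distinct_card[OF d])
  also have "\<dots> = m" using l assms(2) by simp
  finally show ?thesis .
qed

lemma take_perm_subset:
  assumes "\<pi> \<in> permutations_of_set V"
  shows "set (take m \<pi>) \<subseteq> V"
proof -
  have "set (take m \<pi>) \<subseteq> set \<pi>" by (rule set_take_subset)
  then show ?thesis using permutations_of_setD(1)[OF assms] by simp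
qed

lemma sym_cnt:
  assumes "\<sigma> permutes V"
  shows "card {\<pi>\<in>permutations_of_set V. \<sigma> ` s \<subseteq> set (take m \<pi>)}
       = card {\<pi>\<in>permutations_of_set V. s \<subseteq> set (take m \<pi>)}"
proof -
  have inj: "inj \<sigma>" using assms permutes_inj by blast
  have im: "map \<sigma> ` permutations_of_set V = permutations_of_set V"
    using assms permutations_of_set_image_permutes by blast
  have key: "\<And>\<pi>. (\<sigma> ` s \<subseteq> set (take m (map \<sigma> \<pi>))) = (s \<subseteq> set (take m \<pi>))"
    using inj by (simp add: take_map inj_image_subset_iff)
  have "{\<pi>\<in>permutations_of_set V. \<sigma> ` s \<subseteq> set (take m \<pi>)}
      = map \<sigma> ` {\<pi>\<in>permutations_of_set V. s \<subseteq> set (take m \<pi>)}"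
  proof
    show "{\<pi>\<in>permutations_of_set V. \<sigma> ` s \<subseteq> set (take m \<pi>)}
      \<subseteq> map \<sigma> ` {\<pi>\<in>permutations_of_set V. s \<subseteq> set (take m \<pi>)}"
    proof
      fix \<pi> assume h: "\<pi> \<in> {\<pi>\<in>permutations_of_set V. \<sigma> ` s \<subseteq> set (take m \<pi>)}"
      then obtain \<pi>0 where "\<pi>0 \<in> permutations_of_set V" "\<pi> = map \<sigma> \<pi>0"
        using im by (metis (no_types, lifting) imageE mem_Collect_eq)
      then show "\<pi> \<in> map \<sigma> ` {\<pi>\<in>permutations_of_set V. s \<subseteq> set (take m \<pi>)}"
        using h key by auto
    qed
  next
    show "map \<sigma> ` {\<pi>\<in>permutations_of_set V. s \<subseteq> set (take m \<pi>)}
       \<subseteq> {\<pi>\<in>permutations_of_set V. \<sigma> ` s \<subseteq> set (take m \<pi>)}"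
      using im key by auto
  qed
  moreover have "inj_on (map \<sigma>) X" for X using inj by (meson inj_mapI inj_on_subset subset_UNIV)
  ultimately show ?thesis by (simp add: card_image)
qed

lemma two_trans:
  assumes "a \<in> V" "b \<in> V" "c \<in> V" "d \<in> V" "a \<noteq> b" "c \<noteq> d"
  shows "\<exists>\<sigma>. \<sigma> permutes V \<and> \<sigma> ` {a,b} = {c,d}"
proof -
  define s1 where "s1 = Transposition.transpose a c"
  define b' where "b' = s1 b"
  define s2 where "s2 = Transposition.transpose b' d"
  have p1: "s1 permutes V" unfolding s1_def by (rule permutes_swap_id[OF assms(1) assms(3)])
  have b'V: "b' \<in> V" unfolding b'_def using p1 assms(2) by (simp add: permutes_in_image)
  have p2: "s2 permutes V" unfolding s2_def by (rule permutes_swap_id[OF b'V assms(4)])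
  have e1: "s1 a = c" unfolding s1_def by (rule transpose_apply_first)
  have "b \<noteq> a" using assms by blast
  then have "b' \<noteq> c" unfolding b'_def s1_def
    by (metis transpose_apply_first transpose_eq_iff)
  then have "s2 c = c" unfolding s2_def using assms by (simp add: transpose_apply_other)
  then have "(s2 \<circ> s1) a = c" using e1 by simp
  moreover have "(s2 \<circ> s1) b = d" unfolding s2_def b'_def by simp
  moreover have "(s2 \<circ> s1) permutes V" using p1 p2 permutes_compose by blast
  ultimately show ?thesis by (intro exI[of _ "s2 \<circ> s1"]) auto
qed


lemma w1: "Suc x choose 2 = x + (x choose 2)"
  using binomial_Suc_Suc[of x 1] by (simp add: numeral_2_eq_2)
lemma w2: "2 * x + x * (x - 1) = Suc x * (Suc x - 1)"
  by (cases x) (simp_all add: algebra_simps)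
lemma two_choose: "2 * (x choose 2) = x * (x - 1)"
proof (induct x)
  case (Suc x)
  have "2 * (Suc x choose 2) = 2 * x + 2 * (x choose 2)" using w1 by simp
  also have "\<dots> = 2 * x + x * (x - 1)" using Suc by simp
  also have "\<dots> = Suc x * (Suc x - 1)" by (rule w2)
  finally show ?case .
qed simp

lemma cnt_equal:
  assumes "s \<subseteq> V" "card s = 2" "s0 \<subseteq> V" "card s0 = 2"
  shows "card {\<pi>\<in>permutations_of_set V. s \<subseteq> set (take m \<pi>)}
       = card {\<pi>\<in>permutations_of_set V. s0 \<subseteq> set (take m \<pi>)}"
proof -
  obtain a b where ab: "s = {a,b}" "a \<noteq> b" using assms(2) card_2_iff by metis
  obtain c d where cd: "s0 = {c,d}" "c \<noteq> d" using assms(4) card_2_iff by metis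
  obtain \<sigma> where \<sigma>: "\<sigma> permutes V" "\<sigma> ` {c,d} = {a,b}"
    using two_trans[of c V d a b] ab cd assms(1,3) by auto
  have "\<sigma> ` s0 = s" using \<sigma>(2) ab cd by simp
  with sym_cnt[OF \<sigma>(1), of s0 m] show ?thesis by (simp only:)
qed

lemma cnt_formula:
  assumes fin: "finite V" and mn: "m \<le> card V" and s0: "s0 \<subseteq> V" "card s0 = 2"
  shows "(card V choose 2) * card {\<pi>\<in>permutations_of_set V. s0 \<subseteq> set (take m \<pi>)}
       = card (permutations_of_set V) * (m choose 2)"
proof -
  define T2 where "T2 = {s. s \<subseteq> V \<and> card s = 2}"
  have fT2: "finite T2" unfolding T2_def using fin by simp
  have cT2: "card T2 = card V choose 2" unfolding T2_def using n_subsets[OF fin] .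
  have "(\<Sum>s\<in>T2. card {\<pi>\<in>permutations_of_set V. s \<subseteq> set (take m \<pi>)})
      = (\<Sum>s\<in>T2. card {\<pi>\<in>permutations_of_set V. s0 \<subseteq> set (take m \<pi>)})"
    by (rule sum.cong) (auto simp: T2_def intro!: cnt_equal s0)
  also have "\<dots> = card T2 * card {\<pi>\<in>permutations_of_set V. s0 \<subseteq> set (take m \<pi>)}"
    by simp
  finally have 1: "(\<Sum>s\<in>T2. card {\<pi>\<in>permutations_of_set V. s \<subseteq> set (take m \<pi>)})
      = card T2 * card {\<pi>\<in>permutations_of_set V. s0 \<subseteq> set (take m \<pi>)}" .
  have "(\<Sum>s\<in>T2. card {\<pi>\<in>permutations_of_set V. s \<subseteq> set (take m \<pi>)})
      = (\<Sum>\<pi>\<in>permutations_of_set V. card {s\<in>T2. s \<subseteq> set (take m \<pi>)})"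
    by (rule double_count[OF fT2 finite_permutations_of_set])
  also have "\<dots> = (\<Sum>\<pi>\<in>permutations_of_set V. m choose 2)"
  proof (rule sum.cong)
    fix \<pi> assume h: "\<pi> \<in> permutations_of_set V"
    have "{s\<in>T2. s \<subseteq> set (take m \<pi>)} = {s. s \<subseteq> set (take m \<pi>) \<and> card s = 2}"
      unfolding T2_def using take_perm_subset[OF h, of m] by auto
    then show "card {s\<in>T2. s \<subseteq> set (take m \<pi>)} = m choose 2"
      using n_subsets[of "set (take m \<pi>)" 2] card_take_perm[OF h mn] by simp
  qed simp
  also have "\<dots> = card (permutations_of_set V) * (m choose 2)" by simp
  finally show ?thesis using 1 cT2 by simp
qed

lemma handshake:
  assumes "ugraph V E" "\<forall>v\<in>V. degree E v \<le> d"
  shows "2 * card E \<le> card V * d"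
proof -
  have fV: "finite V" and EV: "\<forall>e\<in>E. e \<subseteq> V \<and> card e = 2"
    using assms(1) unfolding ugraph_def by auto
  have fE: "finite E"
    by (rule finite_subset[of E "Pow V"]) (use EV fV in auto)
  have "(\<Sum>v\<in>V. card {e\<in>E. v \<in> e}) = (\<Sum>e\<in>E. card {v\<in>V. v \<in> e})"
    by (rule double_count[OF fV fE])
  also have "\<dots> = (\<Sum>e\<in>E. 2)"
  proof (rule sum.cong)
    fix e assume "e \<in> E"
    then have "{v\<in>V. v \<in> e} = e" "card e = 2" using EV by auto
    then show "card {v\<in>V. v \<in> e} = 2" by simp
  qed simp
  finally have "2 * card E = (\<Sum>v\<in>V. degree E v)" by (simp add: degree_def)
  also have "\<dots> \<le> (\<Sum>v\<in>V. d)" by (rule sum_mono) (use assms(2) in auto)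
  finally show ?thesis by simp
qed

lemma cov_bound:
  assumes "\<forall>e\<in>E. card e = 2"
  shows "card (covered_vertices E P) \<le> 2 * card (internal_edges E P)"
proof -
  have eq: "covered_vertices E P = \<Union>(internal_edges E P)"
    unfolding covered_vertices_def internal_edges_def by auto
  have "card (\<Union>(internal_edges E P)) \<le> sum card (internal_edges E P)"
    by (rule card_Union_le_sum_card)
  also have "\<dots> = (\<Sum>e\<in>internal_edges E P. 2)"
    by (rule sum.cong) (use assms in \<open>auto simp: internal_edges_def\<close>)
  also have "\<dots> = 2 * card (internal_edges E P)" by simp
  finally show ?thesis using eq by simp
qed


lemma final_arith:
  fixes S c N n m d k \<delta> :: real
  assumes "S \<le> n * d * c" "c * (n * (n - 1)) = N * (m * (m - 1))" "N > 0"
    "n \<ge> 2" "m \<ge> 2" "m \<le> \<delta> * n" "\<delta> \<le> 1" "\<delta> * d \<le> k" "d \<ge> 0"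
  shows "S / N \<le> 1 * k * m"
proof -
  have n1: "n - 1 > 0" using assms by simp
  have nc: "n * c = N * (m * (m - 1)) / (n - 1)" using assms(2) n1
    by (simp add: field_simps)
  have "S / N \<le> n * d * c / N" using assms(1,3) by (simp add: divide_right_mono)
  also have "\<dots> = d * (n * c) / N" by (simp add: algebra_simps)
  also have "\<dots> = d * (N * (m * (m - 1)) / (n - 1)) / N" using nc by simp
  also have "\<dots> = d * m * ((m - 1) / (n - 1))" using assms(3) n1 by (simp add: field_simps)
  also have "\<dots> \<le> d * m * \<delta>"
  proof (rule mult_left_mono)
    have "m - 1 \<le> \<delta> * (n - 1)" using assms(6,7) by (simp add: algebra_simps)
    then show "(m - 1) / (n - 1) \<le> \<delta>" using n1 by (simp add: divide_le_eq)
  qed (use assms in simp)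
  also have "\<dots> \<le> k * m" using assms(5,8) by (simp add: mult_right_mono mult.commute mult.left_commute)
  finally show ?thesis by simp
qed

lemma expA: fixes PP :: "'a list set" and E :: "'a set set"
  assumes nePi: "PP \<noteq> {}" and finPi: "finite PP"
  shows "measure_pmf.expectation (pmf_of_set PP)
        (\<lambda>\<pi>. real (card (covered_vertices E (set (take m \<pi>)))))
      = (\<Sum>\<pi>\<in>PP. real (card (covered_vertices E (set (take m \<pi>))))) / real (card PP)"
  by (rule integral_pmf_of_set[OF nePi finPi])
lemma expB: fixes PP :: "'a list set" and E :: "'a set set"
  assumes nePi: "PP \<noteq> {}" and finPi: "finite PP" and Peq: "\<And>\<pi>. prefix_set \<delta> V \<pi> = set (take m \<pi>)"
  shows "measure_pmf.expectation (pmf_of_set PP)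
        (\<lambda>\<pi>. real (card (covered_vertices E (prefix_set \<delta> V \<pi>))))
      = (\<Sum>\<pi>\<in>PP. real (card (covered_vertices E (set (take m \<pi>))))) / real (card PP)"
  unfolding Peq by (rule expA[OF nePi finPi])

theorem lemma9:
  "\<exists>C>0. \<forall>(V::'a set) E (d::nat) (k::real) (\<delta>::real).
     ugraph V E \<and> V \<noteq> {} \<and> d > 0 \<and> (\<forall>v\<in>V. degree E v \<le> d) \<and>
     0 < \<delta> \<and> \<delta> \<le> 1 \<and> \<delta> \<le> k / real d \<longrightarrow>
     measure_pmf.expectation (pmf_of_set (permutations_of_set V))
        (\<lambda>\<pi>. real (card (covered_vertices E (prefix_set \<delta> V \<pi>))))
     \<le> C * k * real (nat \<lfloor>\<delta> * real (card V)\<rfloor>)"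
proof (intro exI[of _ 1] conjI allI impI)
  show "(0::real) < 1" by simp
  fix V :: "'a set" and E and d :: nat and k \<delta> :: real
  assume H: "ugraph V E \<and> V \<noteq> {} \<and> d > 0 \<and> (\<forall>v\<in>V. degree E v \<le> d) \<and>
     0 < \<delta> \<and> \<delta> \<le> 1 \<and> \<delta> \<le> k / real d"
  have ug: "ugraph V E" and dpos: "d > 0" and deg: "\<forall>v\<in>V. degree E v \<le> d"
    and dp: "0 < \<delta>" "\<delta> \<le> 1" "\<delta> \<le> k / real d" using H by auto
  have fV: "finite V" and EV: "\<forall>e\<in>E. e \<subseteq> V \<and> card e = 2"
    using ug unfolding ugraph_def by auto
  have fE: "finite E"
    by (rule finite_subset[of E "Pow V"]) (use EV fV in auto)
  have rdpos: "real d > 0" using dpos by simp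
  have dk: "\<delta> * real d \<le> k" using dp(3) pos_le_divide_eq[OF rdpos] by blast
  have "0 \<le> \<delta> * real d" using dp(1) by simp
  with dk have kpos: "k \<ge> 0" by linarith
  define n where "n = card V"
  define m where "m = nat \<lfloor>\<delta> * real n\<rfloor>"
  define PP where "PP = permutations_of_set V"
  have mle: "real m \<le> \<delta> * real n" unfolding m_def using dp(1)
    by (simp add: of_nat_nat)  
  have mn: "m \<le> n"
  proof -
    have "\<delta> * real n \<le> real n" by (rule mult_left_le_one_le) (use dp in auto)
    then show ?thesis using mle by linarith
  qed
  have finPi: "finite PP" and nePi: "PP \<noteq> {}" unfolding PP_def using fV by auto
  have cPi: "card PP > 0" using finPi nePi by (simp add: card_gt_0_iff)
  have Peq: "\<And>\<pi>. prefix_set \<delta> V \<pi> = set (take m \<pi>)" by (simp add: prefix_set_def m_def n_def)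
  have expect: "measure_pmf.expectation (pmf_of_set PP)
        (\<lambda>\<pi>. real (card (covered_vertices E (prefix_set \<delta> V \<pi>))))
      = (\<Sum>\<pi>\<in>PP. real (card (covered_vertices E (set (take m \<pi>))))) / real (card PP)"
    by (rule expB[OF nePi finPi Peq])
  show "measure_pmf.expectation (pmf_of_set (permutations_of_set V))
        (\<lambda>\<pi>. real (card (covered_vertices E (prefix_set \<delta> V \<pi>))))
     \<le> 1 * k * real (nat \<lfloor>\<delta> * real (card V)\<rfloor>)"
  proof (cases "m \<le> 1")
    case True
    have "covered_vertices E (set (take m \<pi>)) = {}" for \<pi>
    proof -
      have "card (set (take m \<pi>)) \<le> length (take m \<pi>)" by (rule card_length)
      also have "\<dots> \<le> 1" using True by simp
      finally have c1: "card (set (take m \<pi>)) \<le> 1" .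
      moreover have "card e = 2 \<Longrightarrow> e \<subseteq> set (take m \<pi>) \<Longrightarrow> False" for e
        using card_mono[of "set (take m \<pi>)" e] c1 by simp
      then show ?thesis using EV
        unfolding covered_vertices_def internal_edges_def by auto
    qed
    then have "measure_pmf.expectation (pmf_of_set PP)
        (\<lambda>\<pi>. real (card (covered_vertices E (prefix_set \<delta> V \<pi>)))) = 0"
      using expect by simp
    then show ?thesis using kpos unfolding PP_def by simp
  next
    case False
    then have m2: "m \<ge> 2" by simp
    with mn have n2: "n \<ge> 2" by simp
    obtain s0 where s0: "s0 \<subseteq> V" "card s0 = 2" "finite s0"
      using obtain_subset_with_card_n[of 2 V] n2 n_def by auto
    define cnt where "cnt s = card {\<pi>\<in>PP. s \<subseteq> set (take m \<pi>)}" for s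
    have form: "(n choose 2) * cnt s0 = card PP * (m choose 2)"
      unfolding cnt_def PP_def n_def using cnt_formula[OF fV _ s0(1,2)] mn n_def by simp
    have eqE: "cnt e = cnt s0" if "e \<in> E" for e
      unfolding cnt_def PP_def using cnt_equal[of e V s0 m] EV that s0 by auto
    have "(\<Sum>\<pi>\<in>PP. card (covered_vertices E (set (take m \<pi>))))
        \<le> (\<Sum>\<pi>\<in>PP. 2 * card (internal_edges E (set (take m \<pi>))))"
      by (rule sum_mono) (use cov_bound EV in auto)
    also have "\<dots> = 2 * (\<Sum>\<pi>\<in>PP. card {e\<in>E. e \<subseteq> set (take m \<pi>)})"
      by (simp add: internal_edges_def sum_distrib_left)
    also have "\<dots> = 2 * (\<Sum>e\<in>E. cnt e)"
      unfolding cnt_def by (simp add: double_count[OF finPi fE])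
    also have "\<dots> = 2 * card E * cnt s0" using eqE by simp
    also have "\<dots> \<le> n * d * cnt s0" using handshake[OF ug deg] n_def by simp
    finally have Sb: "(\<Sum>\<pi>\<in>PP. card (covered_vertices E (set (take m \<pi>)))) \<le> n * d * cnt s0" .
    have formr: "real (cnt s0) * (real n * (real n - 1)) = real (card PP) * (real m * (real m - 1))"
    proof -
      have "(2 * (n choose 2)) * cnt s0 = 2 * ((n choose 2) * cnt s0)" by (rule mult.assoc)
      also have "\<dots> = 2 * (card PP * (m choose 2))" using form by simp
      also have "\<dots> = card PP * (2 * (m choose 2))" by (rule mult.left_commute)
      finally have "(2 * (n choose 2)) * cnt s0 = card PP * (2 * (m choose 2))" .
      then have "n * (n - 1) * cnt s0 = card PP * (m * (m - 1))"
        by (simp only: two_choose)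
      then have "real (n * (n - 1) * cnt s0) = real (card PP * (m * (m - 1)))"
        by (simp only:)
      then show ?thesis using n2 m2 by (simp add: of_nat_diff algebra_simps)
    qed
    have "(\<Sum>\<pi>\<in>PP. real (card (covered_vertices E (set (take m \<pi>))))) / real (card PP)
        \<le> 1 * k * real m"
    proof (rule final_arith[where c = "real (cnt s0)" and n = "real n" and d = "real d" and \<delta> = \<delta>])
      show "(\<Sum>\<pi>\<in>PP. real (card (covered_vertices E (set (take m \<pi>)))))
          \<le> real n * real d * real (cnt s0)"
      proof -
        from Sb have "real (\<Sum>\<pi>\<in>PP. card (covered_vertices E (set (take m \<pi>)))) \<le> real (n * d * cnt s0)"
          by (simp only: of_nat_le_iff)
        then show ?thesis by simp
      qed
      show "real (cnt s0) * (real n * (real n - 1)) = real (card PP) * (real m * (real m - 1))"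
        by (rule formr)
      show "0 < real (card PP)" using cPi by simp
      show "2 \<le> real n" using n2 by simp
      show "2 \<le> real m" using m2 by simp
      show "real m \<le> \<delta> * real n" by (rule mle)
      show "\<delta> \<le> 1" by (rule dp(2))
      show "\<delta> * real d \<le> k" by (rule dk)
      show "0 \<le> real d" by simp
    qed
    then have "measure_pmf.expectation (pmf_of_set PP)
        (\<lambda>\<pi>. real (card (covered_vertices E (prefix_set \<delta> V \<pi>)))) \<le> 1 * k * real m"
      by (simp only: expect)
    then show ?thesis by (simp only: PP_def m_def n_def)
  qed
qed

end
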